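(* Let $\alpha$ and $\theta_\alpha$ be as in the context. For $n\in\mathbb N$ put $\kappa(n):=-n\log2/\log a_n$, and $\kappa_+:=\inf\{\kappa(n):n\in\mathbb N\}$, $\kappa_-:=\sup\{\kappa(n):n\in\mathbb N\}$. Then $\theta_\alpha$ is $\kappa_+$-Hölder continuous and $\kappa_-$-sub-Hölder continuous.
   Context: Let $\mathcal U=[0,1]$. $\alpha=\{A_n:n\in\mathbb N\}$ is a countable partition of $\mathcal U$ (up to the point $0$) into left-open, right-closed intervals of positive length, ordered from right to left starting with $A_1$, accumulating only at $0$; $a_n$ is the length of $A_n$, $t_n:=\sum_{k\ge n}a_k$, $A_n=(t_{n+1},t_n]$. $L_\alpha(x)=(t_n-x)/a_n$ on $A_n$, $L_\alpha(0)=0$. For $x\ne0$, the $\alpha$-Lüroth digits $\ell_k$ are defined by $L_\alpha^{k-1}(x)\in A_{\ell_k}$ (terminating at step $k$ iff $L_\alpha^{k-1}(x)=t_n$ for some $n\ge2$), written $x=[\ell_1,\ell_2,\dots]_\alpha$. The map $\theta_\alpha:\mathcal U\to\mathcal U$ is $\theta_\alpha(0)=0$ and $\theta_\alpha([\ell_1,\ell_2,\dots]_\alpha):=-2\sum_{k\ge1}(-1)^k2^{-\sum_{i=1}^k\ell_i}$. A map $S:\mathcal U\to\mathcal U$ is $\kappa$-Hölder continuous if $|S(x)-S(y)|\le c|x-y|^\kappa$ for some $c>0$ and all $x,y$; for $\kappa\in(0,\infty)$ it is $\kappa$-sub-Hölder continuous if there is $c>0$ with $|S(x)-S(y)|\ge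 c|x-y|^\kappa$ for all $x,y\in\mathcal U$. *)

theory Defs
  imports "HOL-Analysis.Analysis"
begin

text \<open>The partition alpha is given by the lengths a n (n >= 1); the value a 0 is irrelevant.\<close>

definition lueroth_partition :: "(nat \<Rightarrow> real) \<Rightarrow> bool" where
  "lueroth_partition a \<longleftrightarrow> (\<forall>n\<ge>1. a n > 0) \<and> summable a \<and> (\<Sum>n. a (n + 1)) = 1"

definition tail :: "(nat \<Rightarrow> real) \<Rightarrow> nat \<Rightarrow> real" where
  "tail a n = (\<Sum>k. a (k + n))"

definition lue_digit :: "(nat \<Rightarrow> real) \<Rightarrow> real \<Rightarrow> nat" where
  "lue_digit a x = (THE n. 1 \<le> n \<and> tail a (Suc n) < x \<and> x \<le> tail a n)"

definition lue_map :: "(nat \<Rightarrow> real) \<Rightarrow> real \<Rightarrow> real" where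
  "lue_map a x = (if x = 0 then 0
     else (tail a (lue_digit a x) - x) / a (lue_digit a x))"

text \<open>theta_alpha: the (k+1)-st digit is lue_digit a ((lue_map a ^^ k) x), present as long as
  (lue_map a ^^ k) x \<noteq> 0; the expansion terminates once the orbit hits 0.\<close>
definition theta :: "(nat \<Rightarrow> real) \<Rightarrow> real \<Rightarrow> real" where
  "theta a x = -2 * (\<Sum>k. if (lue_map a ^^ k) x = 0 then 0
      else (-1) ^ (k + 1) * (1/2) ^ (\<Sum>i\<le>k. lue_digit a ((lue_map a ^^ i) x)))"

definition holder_cont :: "(real \<Rightarrow> real) \<Rightarrow> real \<Rightarrow> bool" where
  "holder_cont S \<kappa> \<longleftrightarrow> (\<exists>c>0. \<forall>x\<in>{0..1}. \<forall>y\<in>{0..1}. \<bar>S x - S y\<bar> \<le> c * \<bar>x - y\<bar> powr \<kappa>)"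

definition sub_holder_cont :: "(real \<Rightarrow> real) \<Rightarrow> real \<Rightarrow> bool" where
  "sub_holder_cont S \<kappa> \<longleftrightarrow> (\<exists>c>0. \<forall>x\<in>{0..1}. \<forall>y\<in>{0..1}. \<bar>S x - S y\<bar> \<ge> c * \<bar>x - y\<bar> powr \<kappa>)"

definition kappa :: "(nat \<Rightarrow> real) \<Rightarrow> nat \<Rightarrow> real" where
  "kappa a n = - real n * ln 2 / ln (a n)"

end

theory Submission
  imports Defs
begin



locale LP = fixes a :: "nat \<Rightarrow> real" assumes lp: "lueroth_partition a"
begin

lemma apos: "1 \<le> n \<Longrightarrow> a n > 0" using lp unfolding lueroth_partition_def by auto
lemma summ: "summable a" using lp unfolding lueroth_partition_def by auto
lemma tsumm: "summable (\<lambda>k. a (k + n))" using summ summable_ignore_initial_segment by blast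

lemma t_step: "tail a n = a n + tail a (Suc n)"
proof -
  have "(\<Sum>k. a (Suc k + n)) = (\<Sum>k. a (k + n)) - a (0 + n)"
    using suminf_split_head[OF tsumm[of n]] by simp
  thus ?thesis unfolding tail_def by (simp add: add.commute)
qed

lemma t1: "tail a 1 = 1" using lp unfolding lueroth_partition_def tail_def by simp

lemma t_nonneg: "1 \<le> n \<Longrightarrow> 0 \<le> tail a n"
  unfolding tail_def by (rule suminf_nonneg[OF tsumm]) (simp add: apos less_imp_le)

lemma t_pos: "1 \<le> n \<Longrightarrow> 0 < tail a n"
  using t_step[of n] t_nonneg[of "Suc n"] apos[of n] by simp

lemma t_mono: assumes "1 \<le> m" "m \<le> n" shows "tail a n \<le> tail a m"
  using assms(2)
proof (induction n rule: dec_induct)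
  case base then show ?case by simp
next
  case (step n) then show ?case using t_step[of n] apos[of n] assms(1) by simp
qed

lemma t_strict: "1 \<le> m \<Longrightarrow> m < n \<Longrightarrow> tail a n < tail a m"
  using t_mono[of "Suc m" n] t_step[of m] apos[of m] by simp

lemma t_le1: "1 \<le> n \<Longrightarrow> tail a n \<le> 1" using t_mono[of 1 n] t1 by simp

lemma a_lt1: "1 \<le> n \<Longrightarrow> a n < 1"
  using t_step[of n] t_pos[of "Suc n"] t_le1[of n] by simp

lemma a_le_t: "1 \<le> n \<Longrightarrow> a n \<le> tail a n"
  using t_step[of n] t_nonneg[of "Suc n"] by simp

lemma digit_eq:
  assumes "1 \<le> n" "tail a (Suc n) < x" "x \<le> tail a n"
  shows "lue_digit a x = n"
  unfolding lue_digit_def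
proof (rule the_equality)
  show "1 \<le> n \<and> tail a (Suc n) < x \<and> x \<le> tail a n" using assms by simp
next
  fix m assume m: "1 \<le> m \<and> tail a (Suc m) < x \<and> x \<le> tail a m"
  show "m = n"
  proof (rule ccontr)
    assume "m \<noteq> n"
    then consider "m < n" | "n < m" by linarith
    then show False
    proof cases
      case 1 then have "tail a n \<le> tail a (Suc m)" using t_mono[of "Suc m" n] by simp
      then show False using m assms by simp
    next
      case 2 then have "tail a m \<le> tail a (Suc n)" using t_mono[of "Suc n" m] by simp
      then show False using m assms by simp
    qed
  qed
qed

lemma digit_ex:
  assumes "0 < x" "x \<le> 1"
  shows "\<exists>n. 1 \<le> n \<and> tail a (Suc n) < x \<and> x \<le> tail a n"
proof -
  obtain N where N: "\<forall>n\<ge>N. norm (\<Sum>i. a (i + n)) < x"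
    using suminf_exist_split[OF assms(1) summ] by blast
  have PN: "tail a (Suc N) < x" using N[rule_format, of "Suc N"] unfolding tail_def by simp
  define n where "n = (LEAST m. tail a (Suc m) < x)"
  have Pn: "tail a (Suc n) < x" unfolding n_def by (rule LeastI[of _ N], rule PN)
  have n0: "n \<noteq> 0"
  proof
    assume "n = 0" with Pn t1 assms show False by simp
  qed
  then obtain m where m: "n = Suc m" by (cases n) auto
  have "\<not> tail a (Suc m) < x" using not_less_Least[of m "\<lambda>m. tail a (Suc m) < x"] m n_def by simp
  then show ?thesis using Pn m by (intro exI[of _ n]) auto
qed

lemma digit:
  assumes "0 < x" "x \<le> 1"
  shows "1 \<le> lue_digit a x \<and> tail a (Suc (lue_digit a x)) < x \<and> x \<le> tail a (lue_digit a x)"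
  using digit_ex[OF assms] digit_eq by metis

lemma map_facts:
  assumes "0 < x" "x \<le> 1"
  shows "0 \<le> lue_map a x \<and> lue_map a x < 1 \<and>
     x = tail a (lue_digit a x) - a (lue_digit a x) * lue_map a x"
proof -
  define n where "n = lue_digit a x"
  have d: "1 \<le> n" "tail a (Suc n) < x" "x \<le> tail a n" using digit[OF assms] n_def by auto
  have an: "a n > 0" using apos d by simp
  have L: "lue_map a x = (tail a n - x) / a n" using assms unfolding lue_map_def n_def by simp
  have "tail a n - x < a n" using t_step[of n] d by simp
  then have "0 \<le> (tail a n - x) / a n" "(tail a n - x) / a n < 1" "x = tail a n - a n * ((tail a n - x) / a n)"
    using an d by (auto simp: field_simps)
  then show ?thesis using L unfolding n_def by simp
qed

lemma map_range: "0 \<le> x \<Longrightarrow> x \<le> 1 \<Longrightarrow> 0 \<le> lue_map a x \<and> lue_map a x \<le> 1"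
  using map_facts[of x] by (cases "x = 0") (auto simp: lue_map_def)

lemma orbit_range: "0 \<le> x \<Longrightarrow> x \<le> 1 \<Longrightarrow> 0 \<le> (lue_map a ^^ k) x \<and> (lue_map a ^^ k) x \<le> 1"
  by (induction k) (auto simp: map_range)

lemma orbit0: "(lue_map a ^^ k) 0 = 0"
  by (induction k) (auto simp: lue_map_def)

definition g :: "real \<Rightarrow> nat \<Rightarrow> real" where
  "g x k = (if (lue_map a ^^ k) x = 0 then 0
      else (-1) ^ (k + 1) * (1/2) ^ (\<Sum>i\<le>k. lue_digit a ((lue_map a ^^ i) x)))"

lemma theta_g: "theta a x = -2 * (\<Sum>k. g x k)" unfolding theta_def g_def by simp

lemma g_bound:
  assumes "0 \<le> x" "x \<le> 1"
  shows "\<bar>g x k\<bar> \<le> (1/2) ^ Suc k"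
proof (cases "(lue_map a ^^ k) x = 0")
  case True then show ?thesis by (simp add: g_def)
next
  case False
  have "\<forall>i\<le>k. 1 \<le> lue_digit a ((lue_map a ^^ i) x)"
  proof (intro allI impI)
    fix i assume i: "i \<le> k"
    have ne: "(lue_map a ^^ i) x \<noteq> 0"
    proof
      assume z: "(lue_map a ^^ i) x = 0"
      have "(lue_map a ^^ k) x = (lue_map a ^^ (k - i)) ((lue_map a ^^ i) x)"
        using i by (metis funpow_add le_add_diff_inverse2 o_apply)
      then show False using False z orbit0 by simp
    qed
    then show "1 \<le> lue_digit a ((lue_map a ^^ i) x)"
      using digit[of "(lue_map a ^^ i) x"] orbit_range[OF assms, of i] by auto
  qed
  then have "(\<Sum>i\<le>k. (1::nat)) \<le> (\<Sum>i\<le>k. lue_digit a ((lue_map a ^^ i) x))"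
    by (intro sum_mono) auto
  then have S: "Suc k \<le> (\<Sum>i\<le>k. lue_digit a ((lue_map a ^^ i) x))" by simp
  have "\<bar>g x k\<bar> = (1/2) ^ (\<Sum>i\<le>k. lue_digit a ((lue_map a ^^ i) x))"
    using False by (simp add: g_def abs_mult power_abs)
  also have "\<dots> \<le> (1/2) ^ Suc k" by (rule power_decreasing[OF S]) auto
  finally show ?thesis .
qed

lemma g_summable: "0 \<le> x \<Longrightarrow> x \<le> 1 \<Longrightarrow> summable (g x)"
proof (rule summable_comparison_test[of _ "\<lambda>k. (1/2) ^ Suc k"])
  assume "0 \<le> x" "x \<le> 1"
  then show "\<exists>N. \<forall>n\<ge>N. norm (g x n) \<le> (1/2) ^ Suc n" using g_bound by (metis real_norm_def)
  show "summable (\<lambda>k. (1/2::real) ^ Suc k)" by (simp add: summable_geometric)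
qed

lemma theta_bound:
  assumes "0 \<le> x" "x \<le> 1" shows "\<bar>theta a x\<bar> \<le> 2"
proof -
  have sg: "summable (\<lambda>k. (1/2::real) ^ Suc k)" by (simp add: summable_geometric)
  have s1: "(\<Sum>k. (1/2::real) ^ Suc k) = 1"
    using suminf_mult[of "\<lambda>k. (1/2::real)^k" "1/2"] suminf_geometric[of "1/2::real"]
    by (simp add: summable_geometric)
  have "(\<Sum>k. g x k) \<le> (\<Sum>k. (1/2) ^ Suc k)"
    by (rule suminf_le[OF _ g_summable[OF assms] sg]) (rule abs_le_D1[OF g_bound[OF assms]])
  moreover have "(\<Sum>k. - ((1/2) ^ Suc k)) \<le> (\<Sum>k. g x k)"
  proof (rule suminf_le[OF _ summable_minus[OF sg] g_summable[OF assms]])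
    fix k
    have "\<bar>g x k\<bar> \<le> (1/2) ^ Suc k" by (rule g_bound[OF assms])
    then show "- ((1/2::real) ^ Suc k) \<le> g x k" by linarith
  qed
  moreover have "(\<Sum>k. - ((1/2::real) ^ Suc k)) = -1" using suminf_minus[OF sg] s1 by simp
  ultimately show ?thesis using s1 theta_g[of x] by simp
qed

lemma theta0: "theta a 0 = 0"
  unfolding theta_def by (simp add: orbit0)

lemma theta_eq:
  assumes "0 < x" "x \<le> 1"
  shows "theta a x = 2 * (1/2) ^ lue_digit a x - (1/2) ^ lue_digit a x * theta a (lue_map a x)"
proof -
  define n where "n = lue_digit a x"
  define u where "u = lue_map a x"
  have ur: "0 \<le> u" "u \<le> 1" using map_range[of x] assms u_def by auto
  have g0: "g x 0 = - ((1/2) ^ n)" using assms by (simp add: g_def n_def)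
  have gs: "g x (Suc k) = - ((1/2) ^ n) * g u k" for k
  proof -
    have o: "(lue_map a ^^ Suc k) x = (lue_map a ^^ k) u" by (simp only: funpow_Suc_right o_apply u_def)
    have s: "(\<Sum>i\<le>Suc k. lue_digit a ((lue_map a ^^ i) x)) =
        n + (\<Sum>i\<le>k. lue_digit a ((lue_map a ^^ i) u))"
      by (subst sum.atMost_Suc_shift) (simp add: funpow_Suc_right u_def n_def funpow_swap1 del: funpow.simps)
    show ?thesis unfolding g_def o s by (simp add: power_add)
  qed
  have sx: "summable (g x)" using g_summable assms by simp
  have su: "summable (g u)" using g_summable ur by simp
  have "(\<Sum>k. g x (Suc k)) = - ((1/2) ^ n) * (\<Sum>k. g u k)"
    unfolding gs by (rule suminf_mult[OF su])
  then have "(\<Sum>k. g x k) = - ((1/2) ^ n) - ((1/2) ^ n) * (\<Sum>k. g u k)"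
    using suminf_split_head[OF sx] g0 by simp
  then show ?thesis unfolding theta_g n_def[symmetric] u_def[symmetric] by (simp add: algebra_simps)
qed

end



lemma lim_half:
  fixes A B C :: real
  assumes "\<And>k. A \<le> B + C * (1/2) ^ k"
  shows "A \<le> B"
proof (rule ccontr)
  assume "\<not> A \<le> B"
  then have AB: "A - B > 0" by simp
  show False
  proof (cases "C > 0")
    case True
    obtain k where k: "(1/2::real) ^ k < (A - B) / C"
      using real_arch_pow_inv[of "(A - B) / C" "1/2::real"] AB True by auto
    then have "C * (1/2) ^ k < A - B" using True by (simp add: field_simps)
    then show False using assms[of k] by simp
  next
    case False
    then have "C * (1/2) ^ 0 \<le> 0" by simp
    then show False using assms[of 0] AB by simp
  qed
qed

context LP begin

lemma decomp:
  assumes "0 < x" "x \<le> 1"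
  shows "1 \<le> lue_digit a x \<and> tail a (Suc (lue_digit a x)) < x \<and> x \<le> tail a (lue_digit a x) \<and>
    0 \<le> lue_map a x \<and> lue_map a x < 1 \<and> x = tail a (lue_digit a x) - a (lue_digit a x) * lue_map a x \<and>
    theta a x = 2 * (1/2) ^ lue_digit a x - (1/2) ^ lue_digit a x * theta a (lue_map a x)"
  using digit[OF assms] map_facts[OF assms] theta_eq[OF assms] by blast

lemma theta_range_aux:
  "\<forall>x. 0 \<le> x \<longrightarrow> x \<le> 1 \<longrightarrow> - (2 * (1/2) ^ k) \<le> theta a x \<and> theta a x \<le> 1 + 2 * (1/2) ^ k"
proof (induction k)
  case 0 show ?case
  proof (intro allI impI)
    fix x :: real assume "0 \<le> x" "x \<le> 1"
    then have "\<bar>theta a x\<bar> \<le> 2" by (rule theta_bound)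
    then show "- (2 * (1/2) ^ 0) \<le> theta a x \<and> theta a x \<le> 1 + 2 * (1/2) ^ 0" by (simp add: abs_le_iff)
  qed
next
  case (Suc k)
  show ?case
  proof (intro allI impI)
    fix x :: real assume x: "0 \<le> x" "x \<le> 1"
    show "- (2 * (1/2) ^ Suc k) \<le> theta a x \<and> theta a x \<le> 1 + 2 * (1/2) ^ Suc k"
    proof (cases "x = 0")
      case True then show ?thesis by (simp add: theta0)
    next
      case False
      then have x0: "0 < x" using x by simp
      define n where "n = lue_digit a x"
      define u where "u = lue_map a x"
      define h where "h = (1/2::real) ^ n"
      define e where "e = 2 * (1/2::real) ^ k"
      have D: "1 \<le> n" "0 \<le> u" "u < 1" "theta a x = 2 * h - h * theta a u"
        using decomp[OF x0 x(2)] unfolding n_def u_def h_def by auto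
      have h0: "0 < h" unfolding h_def by simp
      have h1: "h \<le> 1/2" unfolding h_def using power_decreasing[of 1 n "1/2::real"] D(1) by simp
      have e0: "0 \<le> e" unfolding e_def by simp
      have IH: "- e \<le> theta a u" "theta a u \<le> 1 + e" using Suc.IH D(2,3) unfolding e_def by auto
      have p1: "h * theta a u \<le> h * (1 + e)" by (rule mult_left_mono[OF IH(2)]) (use h0 in simp)
      have p2: "h * (- e) \<le> h * theta a u" by (rule mult_left_mono[OF IH(1)]) (use h0 in simp)
      have p3: "h * e \<le> (1/2) * e" by (rule mult_right_mono[OF h1 e0])
      have es: "2 * (1/2::real) ^ Suc k = e / 2" unfolding e_def by simp
      show ?thesis unfolding es D(4) using p1 p2 p3 h0 h1 e0 by (simp add: algebra_simps)
    qed
  qed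
qed

lemma theta_range: "0 \<le> x \<Longrightarrow> x \<le> 1 \<Longrightarrow> 0 \<le> theta a x \<and> theta a x \<le> 1"
proof -
  assume x: "0 \<le> x" "x \<le> 1"
  have "0 \<le> theta a x + 2 * (1/2) ^ k" for k using theta_range_aux[of k] x by auto
  then have "0 \<le> theta a x" using lim_half[of 0 "theta a x" 2] by simp
  moreover have "theta a x \<le> 1 + 2 * (1/2) ^ k" for k using theta_range_aux[of k] x by auto
  then have "theta a x \<le> 1" using lim_half[of "theta a x" 1 2] by simp
  ultimately show ?thesis by simp
qed

lemma theta_t: "1 \<le> n \<Longrightarrow> theta a (tail a n) = 2 * (1/2) ^ n"
proof -
  assume n: "1 \<le> n"
  have t: "0 < tail a n" "tail a n \<le> 1" using t_pos t_le1 n by auto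
  have d: "lue_digit a (tail a n) = n" by (rule digit_eq[OF n t_strict[OF n]]) auto
  have "lue_map a (tail a n) = 0" using t unfolding lue_map_def d by simp
  then show ?thesis using theta_eq[OF t] d theta0 by simp
qed

end



context LP begin

context
  fixes \<kappa> :: real
  assumes k0: "0 \<le> \<kappa>" and hk: "\<And>n. 1 \<le> n \<Longrightarrow> (1/2) ^ n \<le> a n powr \<kappa>"
begin

lemma H0: "0 \<le> v \<Longrightarrow> v \<le> 1 \<Longrightarrow> theta a v \<le> 4 * v powr \<kappa>"
proof -
  assume v: "0 \<le> v" "v \<le> 1"
  show ?thesis
  proof (cases "v = 0")
    case True then show ?thesis by (simp add: theta0)
  next
    case False
    then have v0: "0 < v" using v by simp
    define j where "j = lue_digit a v"
    have D: "1 \<le> j" "tail a (Suc j) < v" "0 \<le> lue_map a v" "lue_map a v < 1"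
       "theta a v = 2 * (1/2) ^ j - (1/2) ^ j * theta a (lue_map a v)"
      using decomp[OF v0 v(2)] unfolding j_def by auto
    have "0 \<le> (1/2::real) ^ j * theta a (lue_map a v)" using theta_range[of "lue_map a v"] D by simp
    then have A: "theta a v \<le> 2 * (1/2) ^ j" using D by simp
    have "a (Suc j) \<le> v" using a_le_t[of "Suc j"] D by simp
    then have "a (Suc j) powr \<kappa> \<le> v powr \<kappa>" using apos[of "Suc j"] k0 by (intro powr_mono2) auto
    then have "(1/2) ^ Suc j \<le> v powr \<kappa>" using hk[of "Suc j"] by simp
    then show ?thesis using A by simp
  qed
qed

lemma H1: "0 \<le> u \<Longrightarrow> u < 1 \<Longrightarrow> 1 - theta a u \<le> 4 * (1 - u) powr \<kappa>"
proof -
  assume u: "0 \<le> u" "u < 1"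
  have t2: "tail a 2 = 1 - a 1" using t_step[of 1] t1 by (simp add: numeral_2_eq_2)
  have a1: "(1/2) \<le> a 1 powr \<kappa>" using hk[of 1] by simp
  show ?thesis
  proof (cases "tail a 2 < u")
    case True
    then have u0: "0 < u" using t_nonneg[of 2] by simp
    have d1: "lue_digit a u = 1" by (rule digit_eq) (use True u t1 in \<open>auto simp: numeral_2_eq_2\<close>)
    define w where "w = lue_map a u"
    have D: "0 \<le> w" "w < 1" "u = 1 - a 1 * w" "theta a u = 1 - theta a w / 2"
      using decomp[OF u0] u unfolding d1 w_def t1 by auto
    have "theta a w \<le> 4 * w powr \<kappa>" using H0 D by simp
    moreover have "(1 - u) powr \<kappa> = a 1 powr \<kappa> * w powr \<kappa>" using D apos[of 1] by (simp add: powr_mult)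
    moreover have "(1/2) * w powr \<kappa> \<le> a 1 powr \<kappa> * w powr \<kappa>" by (rule mult_right_mono[OF a1]) simp
    ultimately show ?thesis using D by simp
  next
    case False
    then have "a 1 \<le> 1 - u" using t2 by simp
    then have "a 1 powr \<kappa> \<le> (1 - u) powr \<kappa>" using apos[of 1] k0 by (intro powr_mono2) auto
    moreover have "0 \<le> theta a u" using theta_range u by simp
    ultimately show ?thesis using a1 by simp
  qed
qed

lemma H2: "\<forall>x y. 0 \<le> x \<longrightarrow> x < y \<longrightarrow> y \<le> 1 \<longrightarrow>
   \<bar>theta a y - theta a x\<bar> \<le> 8 * (y - x) powr \<kappa> + (1/2) ^ k"
proof (induction k)
  case 0
  show ?case
  proof (intro allI impI)
    fix x y :: real assume xy: "0 \<le> x" "x < y" "y \<le> 1"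
    have "\<bar>theta a y - theta a x\<bar> \<le> 1" using theta_range[of x] theta_range[of y] xy by auto
    moreover have "0 \<le> (y - x) powr \<kappa>" by simp
    ultimately show "\<bar>theta a y - theta a x\<bar> \<le> 8 * (y - x) powr \<kappa> + (1/2) ^ 0" by (simp only: power_0)
  qed
next
  case (Suc k)
  show ?case
  proof (intro allI impI)
    fix x y :: real assume xy: "0 \<le> x" "x < y" "y \<le> 1"
    have pxy: "0 \<le> (y - x) powr \<kappa>" by simp
    show "\<bar>theta a y - theta a x\<bar> \<le> 8 * (y - x) powr \<kappa> + (1/2) ^ Suc k"
    proof (cases "x = 0")
      case True
      have "theta a y \<le> 4 * y powr \<kappa>" using H0 xy by simp
      moreover have "0 \<le> theta a y" using theta_range xy by simp
      moreover have "0 \<le> y powr \<kappa>" "0 \<le> (1/2::real) ^ Suc k" by simp_all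
      ultimately have "theta a y \<le> 8 * y powr \<kappa> + (1/2) ^ Suc k" by linarith
      then show ?thesis using True theta_range[of y] xy by (simp add: theta0)
    next
      case False
      then have x0: "0 < x" using xy by simp
      have y0: "0 < y" using xy x0 by simp
      define n where "n = lue_digit a x"
      define m where "m = lue_digit a y"
      define u where "u = lue_map a x"
      define v where "v = lue_map a y"
      have Dx: "1 \<le> n" "tail a (Suc n) < x" "x \<le> tail a n" "0 \<le> u" "u < 1"
        "x = tail a n - a n * u" "theta a x = 2 * (1/2) ^ n - (1/2) ^ n * theta a u"
        using decomp[OF x0] xy unfolding n_def u_def by auto
      have Dy: "1 \<le> m" "tail a (Suc m) < y" "y \<le> tail a m" "0 \<le> v" "v < 1"
        "y = tail a m - a m * v" "theta a y = 2 * (1/2) ^ m - (1/2) ^ m * theta a v"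
        using decomp[OF y0 xy(3)] unfolding m_def v_def by auto
      have tu: "0 \<le> theta a u" "theta a u \<le> 1" using theta_range Dx by auto
      have tv: "0 \<le> theta a v" "theta a v \<le> 1" using theta_range Dy by auto
      have mn: "m \<le> n"
      proof (rule ccontr)
        assume "\<not> m \<le> n"
        then have "tail a m \<le> tail a (Suc n)" using t_mono[of "Suc n" m] by simp
        then show False using Dx Dy xy by simp
      qed
      consider "n = m" | "n = Suc m" | "Suc (Suc m) \<le> n" using mn by linarith
      then show ?thesis
      proof cases
        case 1
        define h where "h = (1/2::real) ^ n"
        have h0: "0 < h" "h \<le> 1/2" unfolding h_def
          using power_decreasing[of 1 n "1/2::real"] Dx(1) by auto
        have an: "0 < a n" using apos Dx by simp
        have yx: "y - x = a n * (u - v)" using Dx(6) Dy(6) 1 by (simp add: algebra_simps)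
        then have "0 < a n * (u - v)" using xy by linarith
        then have vu: "v < u" using an by (simp add: zero_less_mult_iff)
        have IH: "\<bar>theta a u - theta a v\<bar> \<le> 8 * (u - v) powr \<kappa> + (1/2) ^ k"
          using Suc.IH vu Dy(4) Dx(5) by simp
        have eq: "\<bar>theta a y - theta a x\<bar> = h * \<bar>theta a u - theta a v\<bar>"
        proof -
          have "theta a y - theta a x = h * (theta a u - theta a v)"
            using Dx(7) Dy(7) 1 unfolding h_def by (simp add: algebra_simps)
          then show ?thesis using h0 by (simp add: abs_mult)
        qed
        have "h * \<bar>theta a u - theta a v\<bar> \<le> h * (8 * (u - v) powr \<kappa> + (1/2) ^ k)"
          by (rule mult_left_mono[OF IH]) (use h0 in simp)
        also have "\<dots> = 8 * (h * (u - v) powr \<kappa>) + h * (1/2) ^ k" by (simp add: algebra_simps)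
        also have "\<dots> \<le> 8 * (a n powr \<kappa> * (u - v) powr \<kappa>) + (1/2) * (1/2) ^ k"
          using hk[of n] Dx(1) h0 unfolding h_def[symmetric]
          by (intro add_mono mult_left_mono mult_right_mono) auto
        also have "\<dots> = 8 * (y - x) powr \<kappa> + (1/2) ^ Suc k"
          using yx an vu by (simp add: powr_mult)
        finally show ?thesis using eq by simp
      next
        case 2
        define b where "b = tail a n"
        have tb: "theta a b = (1/2) ^ m" unfolding b_def using theta_t[of n] Dx(1) 2 by simp
        have am: "0 < a m" "0 < a n" using apos Dx Dy by auto
        have yb: "y - b = a m * (1 - v)" using Dy(6) t_step[of m] 2 unfolding b_def by (simp add: algebra_simps)
        have bx: "b - x = a n * u" using Dx(6) unfolding b_def by simp
        have e1: "theta a y - theta a b = (1/2) ^ m * (1 - theta a v)" using Dy(7) tb by (simp add: algebra_simps)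
        have e2: "theta a b - theta a x = (1/2) ^ n * theta a u" using Dx(7) tb 2 by (simp add: algebra_simps)
        have "(1/2) ^ m * (1 - theta a v) \<le> (1/2) ^ m * (4 * (1 - v) powr \<kappa>)"
          using H1[of v] Dy by (intro mult_left_mono) auto
        also have "\<dots> \<le> a m powr \<kappa> * (4 * (1 - v) powr \<kappa>)"
          using hk[of m] Dy by (intro mult_right_mono) auto
        also have "\<dots> = 4 * (y - b) powr \<kappa>" using yb am Dy by (simp add: powr_mult)
        finally have f1: "(1/2) ^ m * (1 - theta a v) \<le> 4 * (y - b) powr \<kappa>" .
        have "(1/2) ^ n * theta a u \<le> (1/2) ^ n * (4 * u powr \<kappa>)"
          using H0[of u] Dx by (intro mult_left_mono) auto
        also have "\<dots> \<le> a n powr \<kappa> * (4 * u powr \<kappa>)"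
          using hk[of n] Dx by (intro mult_right_mono) auto
        also have "\<dots> = 4 * (b - x) powr \<kappa>" using bx am Dx by (simp add: powr_mult)
        finally have f2: "(1/2) ^ n * theta a u \<le> 4 * (b - x) powr \<kappa>" .
        have bxy: "x \<le> b" "b < y" using Dx Dy 2 unfolding b_def by auto
        have "(y - b) powr \<kappa> \<le> (y - x) powr \<kappa>" using bxy k0 by (intro powr_mono2) auto
        moreover have "(b - x) powr \<kappa> \<le> (y - x) powr \<kappa>" using bxy k0 by (intro powr_mono2) auto
        moreover have "0 \<le> (1/2::real) ^ m * (1 - theta a v)" using tv by simp
        moreover have "0 \<le> (1/2::real) ^ n * theta a u" using tu by simp
        ultimately have "\<bar>theta a y - theta a x\<bar> \<le> 8 * (y - x) powr \<kappa>"
          using e1 e2 f1 f2 by linarith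
        moreover have "0 \<le> (1/2::real) ^ Suc k" by simp
        ultimately show ?thesis by linarith
      next
        case 3
        have "(1/2::real) ^ n \<le> (1/2) ^ m" using 3 by (intro power_decreasing) auto
        moreover have "0 \<le> (1/2::real)^n * theta a u" "0 \<le> (1/2::real)^m * theta a v"
          using tu tv by simp_all
        moreover have "0 \<le> theta a x" "0 \<le> theta a y" using theta_range xy x0 by auto
        ultimately have r: "\<bar>theta a y - theta a x\<bar> \<le> 2 * (1/2) ^ m"
          using Dx(7) Dy(7) by (simp only: abs_le_iff) linarith
        have "x \<le> tail a (Suc (Suc m))" using Dx(3) t_mono[of "Suc (Suc m)" n] 3 by simp
        then have "a (Suc m) \<le> y - x" using Dy(2) t_step[of "Suc m"] by simp
        then have "a (Suc m) powr \<kappa> \<le> (y - x) powr \<kappa>" using apos[of "Suc m"] k0 by (intro powr_mono2) auto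
        then have "(1/2) ^ Suc m \<le> (y - x) powr \<kappa>" using hk[of "Suc m"] by simp
        moreover have "0 \<le> (1/2::real) ^ Suc k" by simp
        moreover have "2 * (1/2::real) ^ m = 4 * (1/2) ^ Suc m" by simp
        ultimately show ?thesis using r pxy by linarith
      qed
    qed
  qed
qed

lemma holder_main: "0 \<le> x \<Longrightarrow> x \<le> 1 \<Longrightarrow> 0 \<le> y \<Longrightarrow> y \<le> 1 \<Longrightarrow>
   \<bar>theta a x - theta a y\<bar> \<le> 8 * \<bar>x - y\<bar> powr \<kappa>"
proof -
  have M: "\<bar>theta a y - theta a x\<bar> \<le> 8 * (y - x) powr \<kappa>" if "0 \<le> x" "x < y" "y \<le> 1" for x y
    using lim_half[of "\<bar>theta a y - theta a x\<bar>" "8 * (y - x) powr \<kappa>" 1] H2 that by auto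
  assume "0 \<le> x" "x \<le> 1" "0 \<le> y" "y \<le> 1"
  then consider "x < y" | "x = y" | "y < x" by linarith
  then show ?thesis
  proof cases
    case 1 then show ?thesis using M[of x y] \<open>0 \<le> x\<close> \<open>y \<le> 1\<close> by (simp add: abs_minus_commute)
  next
    case 2 then show ?thesis by simp
  next
    case 3 then show ?thesis using M[of y x] \<open>0 \<le> y\<close> \<open>x \<le> 1\<close> by simp
  qed
qed

end
end



lemma pow_powr: "0 < (x::real) \<Longrightarrow> (x ^ n) powr b = (x powr b) ^ n"
  by (simp add: powr_realpow[symmetric] powr_powr powr_power mult.commute)

context LP begin

context
  fixes \<kappa> :: real
  assumes k0: "0 < \<kappa>" and hk: "\<And>n. 1 \<le> n \<Longrightarrow> a n powr \<kappa> \<le> (1/2) ^ n"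
begin

lemma Kex: "\<exists>K\<ge>1. \<forall>m\<ge>1. tail a m powr \<kappa> \<le> K * (1/2) ^ m"
proof -
  define r where "r = (1/2::real) powr (1/\<kappa>)"
  have "(1/\<kappa>) * ln (1/2::real) < 0" using k0 by (intro mult_pos_neg) auto
  then have r0: "0 < r" "r < 1" unfolding r_def by (auto simp: powr_def)
  have rk: "r powr \<kappa> = 1/2" unfolding r_def using k0 by (simp add: powr_powr)
  have aj: "a j \<le> r ^ j" if j: "1 \<le> j" for j
  proof -
    have "a j = (a j powr \<kappa>) powr (1/\<kappa>)" using k0 apos[OF j] by (simp add: powr_powr)
    also have "\<dots> \<le> ((1/2) ^ j) powr (1/\<kappa>)"
      using hk[OF j] k0 by (intro powr_mono2) auto
    also have "\<dots> = r ^ j" unfolding r_def by (simp add: pow_powr)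
    finally show ?thesis .
  qed
  define K where "K = (1 / (1 - r)) powr \<kappa>"
  have K1: "1 \<le> K" unfolding K_def using r0 k0 by (intro ge_one_powr_ge_zero) auto
  have "tail a m powr \<kappa> \<le> K * (1/2) ^ m" if m: "1 \<le> m" for m
  proof -
    have sg: "summable (\<lambda>k. r ^ (k + m))" using r0
      by (simp add: power_add summable_geometric summable_mult2)
    have "tail a m \<le> (\<Sum>k. r ^ (k + m))" unfolding tail_def
      by (rule suminf_le[OF _ tsumm sg]) (use aj m in auto)
    also have "\<dots> = r ^ m * (1 / (1 - r))"
      using suminf_mult2[of "\<lambda>k. r ^ k" "r ^ m"] suminf_geometric[of r] r0
      by (simp add: power_add summable_geometric)
    finally have tm: "tail a m \<le> r ^ m * (1 / (1 - r))" .
    have "tail a m powr \<kappa> \<le> (r ^ m * (1 / (1 - r))) powr \<kappa>"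
      using tm t_nonneg[OF m] k0 by (intro powr_mono2) auto
    also have "\<dots> = (r ^ m) powr \<kappa> * K" unfolding K_def using r0 by (subst powr_mult) auto
    also have "\<dots> = (1/2) ^ m * K" using r0 rk by (simp only: pow_powr)
    finally show ?thesis by (simp add: mult.commute)
  qed
  then show ?thesis using K1 by blast
qed


context
  fixes K :: real
  assumes K1: "1 \<le> K" and hK: "\<And>m. 1 \<le> m \<Longrightarrow> tail a m powr \<kappa> \<le> K * (1/2) ^ m"
begin

lemma S0: "0 \<le> v \<Longrightarrow> v \<le> 1 \<Longrightarrow> v powr \<kappa> \<le> K * theta a v"
proof -
  assume v: "0 \<le> v" "v \<le> 1"
  show ?thesis
  proof (cases "v = 0")
    case True then show ?thesis by (simp add: theta0)
  next
    case False
    then have v0: "0 < v" using v by simp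
    define j where "j = lue_digit a v"
    have D: "1 \<le> j" "v \<le> tail a j" "0 \<le> lue_map a v" "lue_map a v < 1"
       "theta a v = 2 * (1/2) ^ j - (1/2) ^ j * theta a (lue_map a v)"
      using decomp[OF v0 v(2)] unfolding j_def by auto
    have "(1/2::real) ^ j * theta a (lue_map a v) \<le> (1/2) ^ j * 1"
      using theta_range[of "lue_map a v"] D by (intro mult_left_mono) auto
    then have A: "(1/2) ^ j \<le> theta a v" using D by simp
    have "v powr \<kappa> \<le> tail a j powr \<kappa>" using D v0 k0 by (intro powr_mono2) auto
    also have "\<dots> \<le> K * (1/2) ^ j" using hK D by simp
    also have "\<dots> \<le> K * theta a v" using A K1 by (intro mult_left_mono) auto
    finally show ?thesis .
  qed
qed

lemma S1: "0 \<le> u \<Longrightarrow> u < 1 \<Longrightarrow> (1 - u) powr \<kappa> \<le> 2 * K * (1 - theta a u)"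
proof -
  assume u: "0 \<le> u" "u < 1"
  show ?thesis
  proof (cases "tail a 2 < u")
    case True
    then have u0: "0 < u" using t_nonneg[of 2] by simp
    have d1: "lue_digit a u = 1" by (rule digit_eq) (use True u t1 in \<open>auto simp: numeral_2_eq_2\<close>)
    define w where "w = lue_map a u"
    have D: "0 \<le> w" "w < 1" "u = 1 - a 1 * w" "theta a u = 1 - theta a w / 2"
      using decomp[OF u0] u unfolding d1 w_def t1 by auto
    have "a 1 * w \<le> 1 * w" using a_lt1[of 1] D by (intro mult_right_mono) auto
    then have "(1 - u) powr \<kappa> \<le> w powr \<kappa>" using D apos[of 1] k0 by (intro powr_mono2) auto
    also have "\<dots> \<le> K * theta a w" using S0 D by simp
    finally show ?thesis using D by simp
  next
    case False
    have "(1 - u) powr \<kappa> \<le> 1" using u k0 by (intro powr_le1) auto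
    moreover have "theta a u \<le> 1/2"
    proof (cases "u = 0")
      case True then show ?thesis by (simp add: theta0)
    next
      case nz: False
      then have u0: "0 < u" using u by simp
      define j where "j = lue_digit a u"
      have D: "1 \<le> j" "tail a (Suc j) < u" "0 \<le> lue_map a u" "lue_map a u \<le> 1"
         "theta a u = 2 * (1/2) ^ j - (1/2) ^ j * theta a (lue_map a u)"
        using decomp[OF u0] u unfolding j_def by auto
      have j2: "2 \<le> j"
      proof (rule ccontr)
        assume "\<not> 2 \<le> j" then have "j = 1" using D by simp
        then show False using D False by (simp add: numeral_2_eq_2)
      qed
      have "(1/2::real) ^ j \<le> (1/2) ^ 2" using j2 by (intro power_decreasing) auto
      then have p1: "(1/2::real) ^ j \<le> 1/4" by (simp add: power2_eq_square)
      have p2: "0 \<le> (1/2::real) ^ j * theta a (lue_map a u)"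
        using theta_range[of "lue_map a u"] D u by simp
      show ?thesis using D(5) p1 p2 by linarith
    qed
    moreover have "K * (1/2) \<le> K * (1 - theta a u)"
      using calculation(2) K1 by (intro mult_left_mono) auto
    ultimately show ?thesis using K1 by linarith
  qed
qed


lemma S2: "\<forall>x y. 0 \<le> x \<longrightarrow> x < y \<longrightarrow> y \<le> 1 \<longrightarrow>
   ((1/2) powr \<kappa> / (2 * K)) * (y - x) powr \<kappa> \<le> \<bar>theta a y - theta a x\<bar> + (1/2) ^ k"
proof -
  define p where "p = (1/2::real) powr \<kappa>"
  define c where "c = p / (2 * K)"
  have p01: "0 < p" "p \<le> 1" unfolding p_def using k0 by (auto intro: powr_le1)
  have c0: "0 < c" "c \<le> 1" unfolding c_def using p01 K1 by auto
  have cK: "c * K = p / 2" unfolding c_def using K1 by simp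
  have "\<forall>x y. 0 \<le> x \<longrightarrow> x < y \<longrightarrow> y \<le> 1 \<longrightarrow>
     c * (y - x) powr \<kappa> \<le> \<bar>theta a y - theta a x\<bar> + (1/2) ^ k"
  proof (induction k)
    case 0
    show ?case
    proof (intro allI impI)
      fix x y :: real assume xy: "0 \<le> x" "x < y" "y \<le> 1"
      have "(y - x) powr \<kappa> \<le> 1" using xy k0 by (intro powr_le1) auto
      then have "c * (y - x) powr \<kappa> \<le> 1 * 1" using c0 by (intro mult_mono) auto
      then show "c * (y - x) powr \<kappa> \<le> \<bar>theta a y - theta a x\<bar> + (1/2) ^ 0" by simp
    qed
  next
    case (Suc k)
    show ?case
    proof (intro allI impI)
      fix x y :: real assume xy: "0 \<le> x" "x < y" "y \<le> 1"
      have hsk: "0 \<le> (1/2::real) ^ Suc k" by simp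
      show "c * (y - x) powr \<kappa> \<le> \<bar>theta a y - theta a x\<bar> + (1/2) ^ Suc k"
      proof (cases "x = 0")
        case True
        have "c * y powr \<kappa> \<le> c * (K * theta a y)" using S0[of y] xy c0 by (intro mult_left_mono) auto
        also have "\<dots> = (p / 2) * theta a y" using cK by (simp add: mult.assoc[symmetric])
        also have "\<dots> \<le> 1 * theta a y" using p01 theta_range[of y] xy by (intro mult_right_mono) auto
        finally have "c * y powr \<kappa> \<le> theta a y" by simp
        then have "c * (y - 0) powr \<kappa> \<le> theta a y + (1/2) ^ Suc k" using hsk by (simp only: diff_zero)
        then show ?thesis using True theta_range[of y] xy by (simp add: theta0)
      next
        case False
        then have x0: "0 < x" using xy by simp
        have y0: "0 < y" using xy x0 by simp
        define n where "n = lue_digit a x"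
        define m where "m = lue_digit a y"
        define u where "u = lue_map a x"
        define v where "v = lue_map a y"
        have Dx: "1 \<le> n" "tail a (Suc n) < x" "x \<le> tail a n" "0 \<le> u" "u < 1"
          "x = tail a n - a n * u" "theta a x = 2 * (1/2) ^ n - (1/2) ^ n * theta a u"
          using decomp[OF x0] xy unfolding n_def u_def by auto
        have Dy: "1 \<le> m" "tail a (Suc m) < y" "y \<le> tail a m" "0 \<le> v" "v < 1"
          "y = tail a m - a m * v" "theta a y = 2 * (1/2) ^ m - (1/2) ^ m * theta a v"
          using decomp[OF y0 xy(3)] unfolding m_def v_def by auto
        have tu: "0 \<le> theta a u" "theta a u \<le> 1" using theta_range Dx by auto
        have tv: "0 \<le> theta a v" "theta a v \<le> 1" using theta_range Dy by auto
        have mn: "m \<le> n"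
        proof (rule ccontr)
          assume "\<not> m \<le> n"
          then have "tail a m \<le> tail a (Suc n)" using t_mono[of "Suc n" m] by simp
          then show False using Dx Dy xy by simp
        qed
        consider "n = m" | "n = Suc m" | "Suc (Suc m) \<le> n" using mn by linarith
        then show ?thesis
        proof cases
          case 1
          define h where "h = (1/2::real) ^ n"
          have h0: "0 < h" "h \<le> 1/2" unfolding h_def
            using power_decreasing[of 1 n "1/2::real"] Dx(1) by auto
          have an: "0 < a n" using apos Dx by simp
          have yx: "y - x = a n * (u - v)" using Dx(6) Dy(6) 1 by (simp add: algebra_simps)
          then have "0 < a n * (u - v)" using xy by linarith
          then have vu: "v < u" using an by (simp add: zero_less_mult_iff)
          have IH: "c * (u - v) powr \<kappa> \<le> \<bar>theta a u - theta a v\<bar> + (1/2) ^ k"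
            using Suc.IH vu Dy(4) Dx(5) by simp
          have eq: "\<bar>theta a y - theta a x\<bar> = h * \<bar>theta a u - theta a v\<bar>"
          proof -
            have "theta a y - theta a x = h * (theta a u - theta a v)"
              using Dx(7) Dy(7) 1 unfolding h_def by (simp add: algebra_simps)
            then show ?thesis using h0 by (simp add: abs_mult)
          qed
          have "c * (y - x) powr \<kappa> = a n powr \<kappa> * (c * (u - v) powr \<kappa>)"
            using yx an vu by (simp add: powr_mult)
          also have "\<dots> \<le> h * (c * (u - v) powr \<kappa>)"
            using hk[of n] Dx(1) c0 unfolding h_def by (intro mult_right_mono) auto
          also have "\<dots> \<le> h * (\<bar>theta a u - theta a v\<bar> + (1/2) ^ k)"
            by (rule mult_left_mono[OF IH]) (use h0 in simp)
          also have "\<dots> = \<bar>theta a y - theta a x\<bar> + h * (1/2) ^ k" using eq by (simp add: algebra_simps)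
          also have "\<dots> \<le> \<bar>theta a y - theta a x\<bar> + (1/2) * (1/2) ^ k"
            using h0 by (intro add_left_mono mult_right_mono) auto
          finally show ?thesis by simp
        next
          case 2
          define b where "b = tail a n"
          have tb: "theta a b = (1/2) ^ m" unfolding b_def using theta_t[of n] Dx(1) 2 by simp
          have am: "0 < a m" "0 < a n" using apos Dx Dy by auto
          have yb: "y - b = a m * (1 - v)" using Dy(6) t_step[of m] 2 unfolding b_def by (simp add: algebra_simps)
          have bx: "b - x = a n * u" using Dx(6) unfolding b_def by simp
          have e1: "theta a y - theta a b = (1/2) ^ m * (1 - theta a v)" using Dy(7) tb by (simp add: algebra_simps)
          have e2: "theta a b - theta a x = (1/2) ^ n * theta a u" using Dx(7) tb 2 by (simp add: algebra_simps)
          have "(y - b) powr \<kappa> = a m powr \<kappa> * (1 - v) powr \<kappa>" using yb am Dy by (simp add: powr_mult)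
          also have "\<dots> \<le> (1/2) ^ m * (1 - v) powr \<kappa>" using hk[of m] Dy by (intro mult_right_mono) auto
          also have "\<dots> \<le> (1/2) ^ m * (2 * K * (1 - theta a v))" using S1[of v] Dy by (intro mult_left_mono) auto
          also have "\<dots> = 2 * K * (theta a y - theta a b)" using e1 by simp
          finally have f1: "(y - b) powr \<kappa> \<le> 2 * K * (theta a y - theta a b)" .
          have "(b - x) powr \<kappa> = a n powr \<kappa> * u powr \<kappa>" using bx am Dx by (simp add: powr_mult)
          also have "\<dots> \<le> (1/2) ^ n * u powr \<kappa>" using hk[of n] Dx by (intro mult_right_mono) auto
          also have "\<dots> \<le> (1/2) ^ n * (K * theta a u)" using S0[of u] Dx by (intro mult_left_mono) auto
          also have "\<dots> = K * (theta a b - theta a x)" using e2 by simp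
          finally have f2': "(b - x) powr \<kappa> \<le> K * (theta a b - theta a x)" .
          have g2: "0 \<le> theta a b - theta a x" using e2 tu by simp
          have g1: "0 \<le> theta a y - theta a b" using e1 tv by simp
          have "K * (theta a b - theta a x) \<le> 2 * K * (theta a b - theta a x)" using g2 K1 by simp
          then have f2: "(b - x) powr \<kappa> \<le> 2 * K * (theta a b - theta a x)" using f2' by linarith
          have bxy: "x \<le> b" "b < y" using Dx Dy 2 unfolding b_def by auto
          have half: "((y - x) * (1/2)) powr \<kappa> \<le> (y - b) powr \<kappa> + (b - x) powr \<kappa>"
          proof (cases "(y - x) * (1/2) \<le> y - b")
            case True
            then have "((y - x) * (1/2)) powr \<kappa> \<le> (y - b) powr \<kappa>" using xy k0 by (intro powr_mono2) auto
            then show ?thesis by (smt (verit) powr_ge_zero)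
          next
            case False
            then have "((y - x) * (1/2)) powr \<kappa> \<le> (b - x) powr \<kappa>" using xy k0 by (intro powr_mono2) auto
            then show ?thesis by (smt (verit) powr_ge_zero)
          qed
          have "((y - x) * (1/2)) powr \<kappa> = (y - x) powr \<kappa> * p" unfolding p_def using xy by (subst powr_mult) auto
          then have "(y - x) powr \<kappa> * p \<le> 2 * K * (theta a y - theta a x)"
            using half f1 f2 by (simp add: algebra_simps)
          then have "c * (y - x) powr \<kappa> \<le> theta a y - theta a x"
            unfolding c_def using K1 by (simp add: field_simps)
          then show ?thesis using g1 g2 hsk by linarith
        next
          case 3
          have "(1/2::real) ^ n \<le> (1/2) ^ Suc (Suc m)" using 3 by (intro power_decreasing) auto
          moreover have "0 \<le> (1/2::real)^n * theta a u" "(1/2::real)^m * theta a v \<le> (1/2)^m * 1"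
            using tu tv by (simp_all add: mult_left_mono)
          moreover have "(1/2::real) ^ Suc (Suc m) = (1/2)^m / 4" by simp
          ultimately have r: "(1/2) ^ m / 2 \<le> theta a y - theta a x"
            using Dx(7) Dy(7) by linarith
          have "(y - x) powr \<kappa> \<le> tail a m powr \<kappa>" using xy Dy k0 by (intro powr_mono2) auto
          also have "\<dots> \<le> K * (1/2) ^ m" using hK Dy by simp
          finally have "c * (y - x) powr \<kappa> \<le> c * (K * (1/2) ^ m)" using c0 by (intro mult_left_mono) auto
          also have "\<dots> = (p / 2) * (1/2) ^ m" using cK by (simp add: mult.assoc[symmetric])
          also have "\<dots> \<le> (1/2) * (1/2) ^ m" using p01 by (intro mult_right_mono) auto
          finally show ?thesis using r hsk by linarith
        qed
      qed
    qed
  qed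
  then show ?thesis unfolding c_def p_def .
qed


lemma sub_main: "0 \<le> x \<Longrightarrow> x \<le> 1 \<Longrightarrow> 0 \<le> y \<Longrightarrow> y \<le> 1 \<Longrightarrow>
   ((1/2) powr \<kappa> / (2 * K)) * \<bar>x - y\<bar> powr \<kappa> \<le> \<bar>theta a x - theta a y\<bar>"
proof -
  have M: "((1/2) powr \<kappa> / (2 * K)) * (y - x) powr \<kappa> \<le> \<bar>theta a y - theta a x\<bar>"
    if "0 \<le> x" "x < y" "y \<le> 1" for x y
    using lim_half[of "((1/2) powr \<kappa> / (2 * K)) * (y - x) powr \<kappa>" "\<bar>theta a y - theta a x\<bar>" 1] S2 that by auto
  assume "0 \<le> x" "x \<le> 1" "0 \<le> y" "y \<le> 1"
  then consider "x < y" | "x = y" | "y < x" by linarith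
  then show ?thesis
  proof cases
    case 1 then show ?thesis using M[of x y] \<open>0 \<le> x\<close> \<open>y \<le> 1\<close> by (simp add: abs_minus_commute)
  next
    case 2 then show ?thesis using k0 by simp
  next
    case 3 then show ?thesis using M[of y x] \<open>0 \<le> y\<close> \<open>x \<le> 1\<close> by simp
  qed
qed

end
end
end

lemma exp_half: "exp (- real n * ln 2) = (1/2::real) ^ n"
proof -
  have "exp (real n * ln 2) = (2::real) ^ n" by (simp add: exp_of_nat_mult)
  then show ?thesis by (simp add: exp_minus power_one_over inverse_eq_divide)
qed

lemma conv_le:
  assumes "0 < b" "b < 1" "\<kappa> \<le> - real n * ln 2 / ln b"
  shows "(1/2) ^ n \<le> b powr \<kappa>"
proof -
  have L: "ln b < 0" using assms by simp
  have "- real n * ln 2 / ln b * ln b \<le> \<kappa> * ln b"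
    using mult_right_mono_neg[OF assms(3) less_imp_le[OF L]] .
  then have "- real n * ln 2 \<le> \<kappa> * ln b" using L by simp
  then have e: "exp (- real n * ln 2) \<le> exp (\<kappa> * ln b)" by (simp only: exp_le_cancel_iff)
  have "(1/2::real) ^ n \<le> exp (\<kappa> * ln b)" using e exp_half[of n] by linarith
  then show ?thesis using assms by (simp add: powr_def)
qed

lemma conv_ge:
  assumes "0 < b" "b < 1" "- real n * ln 2 / ln b \<le> \<kappa>"
  shows "b powr \<kappa> \<le> (1/2) ^ n"
proof -
  have L: "ln b < 0" using assms by simp
  have "\<kappa> * ln b \<le> - real n * ln 2 / ln b * ln b"
    using mult_right_mono_neg[OF assms(3) less_imp_le[OF L]] .
  then have "\<kappa> * ln b \<le> - real n * ln 2" using L by simp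
  then have e: "exp (\<kappa> * ln b) \<le> exp (- real n * ln 2)" by (simp only: exp_le_cancel_iff)
  have "exp (\<kappa> * ln b) \<le> (1/2::real) ^ n" using e exp_half[of n] by linarith
  then show ?thesis using assms by (simp add: powr_def)
qed

theorem lemma2p3:
  fixes a :: "nat \<Rightarrow> real"
  assumes "lueroth_partition a"
  shows "holder_cont (theta a) (Inf (kappa a ` {n. 1 \<le> n})) \<and>
         (bdd_above (kappa a ` {n. 1 \<le> n}) \<longrightarrow>
           sub_holder_cont (theta a) (Sup (kappa a ` {n. 1 \<le> n})))"
proof -
  interpret LP a by (rule LP.intro[OF assms])
  define S where "S = kappa a ` {n. 1 \<le> n}"
  have ab: "0 < a n" "a n < 1" if "1 \<le> n" for n using apos a_lt1 that by auto
  have kpos: "0 < kappa a n" if n: "1 \<le> n" for n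
  proof -
    have "ln (a n) < 0" using ab[OF n] by simp
    moreover have "- real n * ln 2 < 0" using n by simp
    ultimately show ?thesis unfolding kappa_def using divide_neg_neg[of "- real n * ln 2" "ln (a n)"] by simp
  qed
  have Sne: "S \<noteq> {}" unfolding S_def by auto
  have Spos: "\<And>s. s \<in> S \<Longrightarrow> 0 < s" unfolding S_def using kpos by auto
  have bb: "bdd_below S" using Spos by (meson bdd_below.I less_imp_le)
  have H: "holder_cont (theta a) (Inf S)"
  proof -
    have k0: "0 \<le> Inf S" using Spos Sne by (meson cInf_greatest less_imp_le)
    have hk: "(1/2) ^ n \<le> a n powr Inf S" if n: "1 \<le> n" for n
    proof -
      have "Inf S \<le> kappa a n" using cInf_lower[OF _ bb, of "kappa a n"] n unfolding S_def by auto
      then show ?thesis using conv_le[OF ab[OF n]] unfolding kappa_def by simp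
    qed
    show ?thesis unfolding holder_cont_def
      using holder_main[OF k0 hk] by (intro exI[of _ 8]) auto
  qed
  have SH: "sub_holder_cont (theta a) (Sup S)" if ba: "bdd_above S"
  proof -
    have up: "kappa a n \<le> Sup S" if n: "1 \<le> n" for n
      using cSup_upper[OF _ ba, of "kappa a n"] n unfolding S_def by auto
    have k0: "0 < Sup S" using up[of 1] kpos[of 1] by simp
    have hk: "a n powr Sup S \<le> (1/2) ^ n" if n: "1 \<le> n" for n
      using conv_ge[OF ab[OF n]] up[OF n] unfolding kappa_def by simp
    obtain K where K: "1 \<le> K" "\<forall>m\<ge>1. tail a m powr Sup S \<le> K * (1/2) ^ m"
      using Kex[OF k0 hk] by blast
    have c0: "0 < (1/2) powr Sup S / (2 * K)" using K by simp
    show ?thesis unfolding sub_holder_cont_def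
      using sub_main[OF k0 hk K(1)] K(2) c0 by (intro exI[of _ "(1/2) powr Sup S / (2 * K)"]) auto
  qed
  show ?thesis using H SH unfolding S_def by simp
qed



end
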